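(* Let $\Sigma$ be a finite acyclic set of dependencies and let $\mathcal{D}$ and $\mathcal{D}'$ be databases with $\mathcal{D}'\subseteq\mathcal{D}$. Then $\mathcal{D}'$ is a repair of $\langle\Sigma,\mathcal{D}\rangle$ if and only if $\mathcal{D}'$ is consistent with $\Sigma$ and, for every $\alpha\in\mathcal{D}\setminus\mathcal{D}'$, the database $\mathcal{D}'\cup\{\alpha\}$ is inconsistent with $\Sigma$.
   Context: A signature is a set of predicate symbols with arities, always containing a special 0-ary predicate $\bot$. A term is a constant or a variable; a (predicate) atom is $p(t_1,\dots,t_n)$; an inequality is $t\neq t'$. A database is a finite set of ground atoms (facts) not containing $\bot$. A conjunction with inequalities is a conjunction of at least one predicate atom or inequality. A CQ is $\exists\vec y\,\gamma$ with $\gamma$ a conjunction with inequalities; a UCQ is a finite disjunction of CQs. A dependency is a first-order sentence $\forall\vec x\,(\gamma\rightarrow Q)$ where $\gamma$ (the body) is a conjunction with inequalities whose variables are in $\vec x$, each occurring in some predicate atom of $\gamma$, and $Q$ (the head) is a UCQ whose free variables are among $\vec x$ and in which every existentially quantified variable of each disjunct occurs in a predicate atom of that disjunct. $\mathcal{D}$ is consistent with $\Sigma$ if $\mathcal{D}$ satisfies every dependency of $\Sigma$. A repair of $\langle\Sigma,\mathcal{D}\rangle$ is an inclusion-maximal subset of $\mathcal{D}$ consistent with $\Sigma$. The dependency graph of $\Sigma$ has the dependencies of $\Sigma$ as vertices and an edge from $\tau_1$ to $\tau_2$ iff the head of $\tau_1$ contains an atom whose predicate appears in a predicate atom of the body of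 $\tau_2$; $\Sigma$ is acyclic if this graph has no cycle. *)

theory Defs
  imports Main
begin

datatype ('c, 'v) trm = Cst 'c | Vr 'v

datatype 'p pred = Bot | Pr 'p

fun arity :: "('p \<Rightarrow> nat) \<Rightarrow> 'p pred \<Rightarrow> nat" where
  "arity ar Bot = 0"
| "arity ar (Pr p) = ar p"

datatype ('p, 'c, 'v) lit = PAtom "'p pred" "('c, 'v) trm list" | Neq "('c, 'v) trm" "('c, 'v) trm"

(* A CQ  \<exists> ys. \<gamma>  : existentially quantified variables and a conjunction *)
type_synonym ('p, 'c, 'v) cq = "'v list \<times> ('p, 'c, 'v) lit list"

(* A dependency  \<forall> xs. (body \<rightarrow> head), head a UCQ (list of disjuncts) *)
datatype ('p, 'c, 'v) dep = Dep (uvars: "'v list") (body: "('p, 'c, 'v) lit list")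
                                (head: "('p, 'c, 'v) cq list")

type_synonym ('p, 'c) fact = "'p pred \<times> 'c list"

fun vars_trm :: "('c, 'v) trm \<Rightarrow> 'v set" where
  "vars_trm (Cst c) = {}"
| "vars_trm (Vr x) = {x}"

fun vars_lit :: "('p, 'c, 'v) lit \<Rightarrow> 'v set" where
  "vars_lit (PAtom p ts) = (\<Union>t\<in>set ts. vars_trm t)"
| "vars_lit (Neq s t) = vars_trm s \<union> vars_trm t"

definition vars_conj :: "('p, 'c, 'v) lit list \<Rightarrow> 'v set" where
  "vars_conj \<gamma> = (\<Union>l\<in>set \<gamma>. vars_lit l)"

definition atom_vars :: "('p, 'c, 'v) lit list \<Rightarrow> 'v set" where
  "atom_vars \<gamma> = (\<Union>p ts. if PAtom p ts \<in> set \<gamma> then (\<Union>t\<in>set ts. vars_trm t) else {})"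

definition preds_conj :: "('p, 'c, 'v) lit list \<Rightarrow> 'p pred set" where
  "preds_conj \<gamma> = {p. \<exists>ts. PAtom p ts \<in> set \<gamma>}"

fun wf_lit :: "('p \<Rightarrow> nat) \<Rightarrow> ('p, 'c, 'v) lit \<Rightarrow> bool" where
  "wf_lit ar (PAtom p ts) = (length ts = arity ar p)"
| "wf_lit ar (Neq s t) = True"

definition wf_conj :: "('p \<Rightarrow> nat) \<Rightarrow> ('p, 'c, 'v) lit list \<Rightarrow> bool" where
  "wf_conj ar \<gamma> = (\<gamma> \<noteq> [] \<and> (\<forall>l\<in>set \<gamma>. wf_lit ar l))"

definition wf_dep :: "('p \<Rightarrow> nat) \<Rightarrow> ('p, 'c, 'v) dep \<Rightarrow> bool" where
  "wf_dep ar \<tau> = (wf_conj ar (body \<tau>)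
     \<and> vars_conj (body \<tau>) \<subseteq> set (uvars \<tau>)
     \<and> vars_conj (body \<tau>) \<subseteq> atom_vars (body \<tau>)
     \<and> head \<tau> \<noteq> []
     \<and> (\<forall>(ys, \<gamma>)\<in>set (head \<tau>). wf_conj ar \<gamma>
            \<and> vars_conj \<gamma> - set ys \<subseteq> set (uvars \<tau>)
            \<and> set ys \<subseteq> atom_vars \<gamma>))"

definition is_db :: "('p \<Rightarrow> nat) \<Rightarrow> ('p, 'c) fact set \<Rightarrow> bool" where
  "is_db ar D = (finite D \<and> (\<forall>(p, cs)\<in>D. p \<noteq> Bot \<and> length cs = arity ar p))"

fun eval_trm :: "('v \<Rightarrow> 'c) \<Rightarrow> ('c, 'v) trm \<Rightarrow> 'c" where
  "eval_trm h (Cst c) = c"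
| "eval_trm h (Vr x) = h x"

fun holds_lit :: "('p, 'c) fact set \<Rightarrow> ('v \<Rightarrow> 'c) \<Rightarrow> ('p, 'c, 'v) lit \<Rightarrow> bool" where
  "holds_lit D h (PAtom p ts) = ((p, map (eval_trm h) ts) \<in> D)"
| "holds_lit D h (Neq s t) = (eval_trm h s \<noteq> eval_trm h t)"

definition holds_conj :: "('p, 'c) fact set \<Rightarrow> ('v \<Rightarrow> 'c) \<Rightarrow> ('p, 'c, 'v) lit list \<Rightarrow> bool" where
  "holds_conj D h \<gamma> = (\<forall>l\<in>set \<gamma>. holds_lit D h l)"

definition holds_cq :: "('p, 'c) fact set \<Rightarrow> ('v \<Rightarrow> 'c) \<Rightarrow> ('p, 'c, 'v) cq \<Rightarrow> bool" where
  "holds_cq D h q = (\<exists>g. (\<forall>x. x \<notin> set (fst q) \<longrightarrow> g x = h x) \<and> holds_conj D g (snd q))"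

definition sat_dep :: "('p, 'c) fact set \<Rightarrow> ('p, 'c, 'v) dep \<Rightarrow> bool" where
  "sat_dep D \<tau> = (\<forall>h. holds_conj D h (body \<tau>) \<longrightarrow> (\<exists>q\<in>set (head \<tau>). holds_cq D h q))"

definition consistent :: "('p, 'c, 'v) dep set \<Rightarrow> ('p, 'c) fact set \<Rightarrow> bool" where
  "consistent \<Sigma> D = (\<forall>\<tau>\<in>\<Sigma>. sat_dep D \<tau>)"

definition is_repair :: "('p, 'c, 'v) dep set \<Rightarrow> ('p, 'c) fact set \<Rightarrow> ('p, 'c) fact set \<Rightarrow> bool" where
  "is_repair \<Sigma> D R = (R \<subseteq> D \<and> consistent \<Sigma> R
      \<and> (\<forall>R'. R \<subset> R' \<and> R' \<subseteq> D \<longrightarrow> \<not> consistent \<Sigma> R'))"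

definition head_preds :: "('p, 'c, 'v) dep \<Rightarrow> 'p pred set" where
  "head_preds \<tau> = (\<Union>q\<in>set (head \<tau>). preds_conj (snd q))"

definition dep_graph :: "('p, 'c, 'v) dep set \<Rightarrow> (('p, 'c, 'v) dep \<times> ('p, 'c, 'v) dep) set" where
  "dep_graph \<Sigma> = {(\<tau>1, \<tau>2). \<tau>1 \<in> \<Sigma> \<and> \<tau>2 \<in> \<Sigma> \<and> head_preds \<tau>1 \<inter> preds_conj (body \<tau>2) \<noteq> {}}"

definition acyclic_deps :: "('p, 'c, 'v) dep set \<Rightarrow> bool" where
  "acyclic_deps \<Sigma> = acyclic (dep_graph \<Sigma>)"

end

theory Submission
  imports Defs
begin

lemma holds_lit_mono: "holds_lit D h l \<Longrightarrow> D \<subseteq> E \<Longrightarrow> holds_lit E h l"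
  by (cases l) auto

lemma holds_conj_mono: "holds_conj D h g \<Longrightarrow> D \<subseteq> E \<Longrightarrow> holds_conj E h g"
  unfolding holds_conj_def using holds_lit_mono by blast

lemma holds_cq_mono: "holds_cq D h q \<Longrightarrow> D \<subseteq> E \<Longrightarrow> holds_cq E h q"
  unfolding holds_cq_def using holds_conj_mono by blast

lemma key:
  assumes cD: "consistent \<Sigma> D'" and cR: "consistent \<Sigma> R"
    and sub: "D' \<subseteq> R" and a: "\<alpha> \<in> R - D'"
    and inc: "\<not> consistent \<Sigma> (insert \<alpha> D')"
  shows "\<exists>\<tau>\<in>\<Sigma>. fst \<alpha> \<in> preds_conj (body \<tau>) \<and> (\<exists>\<beta>\<in>R - D'. fst \<beta> \<in> head_preds \<tau>)"
proof -
  from inc obtain \<tau> h where t: "\<tau> \<in> \<Sigma>" and hb: "holds_conj (insert \<alpha> D') h (body \<tau>)"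
    and hn: "\<not> (\<exists>q\<in>set (head \<tau>). holds_cq (insert \<alpha> D') h q)"
    unfolding consistent_def sat_dep_def by blast
  have "\<not> holds_conj D' h (body \<tau>)"
  proof
    assume "holds_conj D' h (body \<tau>)"
    with cD t obtain q where "q \<in> set (head \<tau>)" "holds_cq D' h q"
      unfolding consistent_def sat_dep_def by blast
    with hn holds_cq_mono[of D' h q "insert \<alpha> D'"] show False by blast
  qed
  with hb obtain l where l: "l \<in> set (body \<tau>)" "holds_lit (insert \<alpha> D') h l" "\<not> holds_lit D' h l"
    unfolding holds_conj_def by blast
  obtain p ts where "l = PAtom p ts" "(p, map (eval_trm h) ts) = \<alpha>"
    using l(2,3) by (cases l) auto
  with l have p1: "fst \<alpha> \<in> preds_conj (body \<tau>)" unfolding preds_conj_def by force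
  have "holds_conj R h (body \<tau>)" using hb sub a holds_conj_mono[of "insert \<alpha> D'" h _ R] by blast
  with cR t obtain q where q: "q \<in> set (head \<tau>)" "holds_cq R h q"
    unfolding consistent_def sat_dep_def by blast
  then obtain g where g: "\<forall>x. x \<notin> set (fst q) \<longrightarrow> g x = h x" "holds_conj R g (snd q)"
    unfolding holds_cq_def by blast
  have "\<not> holds_conj (insert \<alpha> D') g (snd q)" using hn q g unfolding holds_cq_def by blast
  with g obtain l' where l': "l' \<in> set (snd q)" "holds_lit R g l'" "\<not> holds_lit (insert \<alpha> D') g l'"
    unfolding holds_conj_def by blast
  obtain p' ts' where e: "l' = PAtom p' ts'" using l'(2,3) by (cases l') auto
  with l' have "(p', map (eval_trm g) ts') \<in> R - D'" by auto
  moreover have "p' \<in> head_preds \<tau>" using e l' q unfolding head_preds_def preds_conj_def by force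
  ultimately show ?thesis using t p1 by force
qed

theorem proposition2:
  fixes ar :: "'p \<Rightarrow> nat"
    and \<Sigma> :: "('p, 'c, 'v) dep set"
    and D D' :: "('p, 'c) fact set"
  assumes "finite \<Sigma>"
    and "\<forall>\<tau>\<in>\<Sigma>. wf_dep ar \<tau>"
    and "acyclic_deps \<Sigma>"
    and "is_db ar D"
    and "is_db ar D'"
    and "D' \<subseteq> D"
  shows "is_repair \<Sigma> D D' \<longleftrightarrow>
           (consistent \<Sigma> D' \<and> (\<forall>\<alpha>\<in>D - D'. \<not> consistent \<Sigma> (insert \<alpha> D')))"
proof
  assume "is_repair \<Sigma> D D'"
  then show "consistent \<Sigma> D' \<and> (\<forall>\<alpha>\<in>D - D'. \<not> consistent \<Sigma> (insert \<alpha> D'))"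
    unfolding is_repair_def by blast
next
  assume A: "consistent \<Sigma> D' \<and> (\<forall>\<alpha>\<in>D - D'. \<not> consistent \<Sigma> (insert \<alpha> D'))"
  show "is_repair \<Sigma> D D'"
    unfolding is_repair_def
  proof (intro conjI allI impI)
    show "D' \<subseteq> D" by fact
    show "consistent \<Sigma> D'" using A by blast
    fix R assume R: "D' \<subset> R \<and> R \<subseteq> D"
    show "\<not> consistent \<Sigma> R"
    proof
      assume cR: "consistent \<Sigma> R"
      have K: "\<And>\<alpha>. \<alpha> \<in> R - D' \<Longrightarrow> \<exists>\<tau>\<in>\<Sigma>. fst \<alpha> \<in> preds_conj (body \<tau>) \<and> (\<exists>\<beta>\<in>R - D'. fst \<beta> \<in> head_preds \<tau>)"
        using key[of \<Sigma> D' R] A cR R by blast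
      define S where "S = {\<tau>\<in>\<Sigma>. (\<exists>\<beta>\<in>R - D'. fst \<beta> \<in> head_preds \<tau>) \<and> (\<exists>\<alpha>\<in>R - D'. fst \<alpha> \<in> preds_conj (body \<tau>))}"
      obtain \<alpha>0 where "\<alpha>0 \<in> R - D'" using R by blast
      with K have Sne: "S \<noteq> {}" unfolding S_def by blast
      have succ: "\<And>\<tau>. \<tau> \<in> S \<Longrightarrow> \<exists>\<tau>'\<in>S. (\<tau>, \<tau>') \<in> dep_graph \<Sigma>"
      proof -
        fix \<tau> assume "\<tau> \<in> S"
        then obtain \<beta> where b: "\<beta> \<in> R - D'" "fst \<beta> \<in> head_preds \<tau>" "\<tau> \<in> \<Sigma>" unfolding S_def by blast
        from K[OF b(1)] obtain \<tau>' where t': "\<tau>' \<in> \<Sigma>" "fst \<beta> \<in> preds_conj (body \<tau>')"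
          "\<exists>\<beta>\<in>R - D'. fst \<beta> \<in> head_preds \<tau>'" by blast
        have "\<tau>' \<in> S" using t' b unfolding S_def by blast
        moreover have "(\<tau>, \<tau>') \<in> dep_graph \<Sigma>" using t' b unfolding dep_graph_def by blast
        ultimately show "\<exists>\<tau>'\<in>S. (\<tau>, \<tau>') \<in> dep_graph \<Sigma>" by blast
      qed
      have fin: "finite (dep_graph \<Sigma>)"
        by (rule finite_subset[of _ "\<Sigma> \<times> \<Sigma>"]) (auto simp: dep_graph_def assms(1))
      have "wf ((dep_graph \<Sigma>)\<inverse>)"
        using finite_acyclic_wf[of "(dep_graph \<Sigma>)\<inverse>"] fin assms(3)
        by (simp add: acyclic_deps_def acyclic_converse)
      then obtain z where "z \<in> S" "\<forall>y. (y, z) \<in> (dep_graph \<Sigma>)\<inverse> \<longrightarrow> y \<notin> S"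
        using Sne by (metis ex_in_conv wf_eq_minimal)
      with succ show False by blast
    qed
  qed
qed

end
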